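(* (i) For every non-negative integer $n$, \[ \sum_{k=0}^{n}(-1)^k\frac{2k+1}{2^{2k}(k+1)}\binom{n}{k}\binom{2k}{k}H_{k+1}O_{k+1}=-\frac{\binom{2n}{n}}{2^{2n}(n+1)}H_{n+1}(O_n-1)+\frac{1}{n+1}\sum_{k=1}^{n}\frac{\binom{2(n-k)}{n-k}}{2^{2(n-k)}k}\left(O_{n-k}-1\right). \] (ii) For every non-negative integer $n$ and all $r,s\in\mathbb{C}\setminus\mathbb{Z}^{-}$ with $s\neq0$ and $r-s\notin\mathbb{Z}^{-}$, \[ \begin{aligned} \sum_{k=1}^{n}(-1)^{k-1}\binom{n}{k}H_k\frac{H_{k+r-s}-H_s}{\binom{k+r}{s}} &=-\frac{r+1}{(r-s+1)^2}\sum_{k=1}^{n}\frac{1}{k\binom{n-k+r}{r-s+1}}-\frac{s}{r-s+1}\sum_{k=1}^{n}\frac{H_{n-k+s-1}-H_{r-s+1}}{k\binom{n-k+r}{r-s+1}}\\ &\quad+\frac{(r+1)H_n}{(r-s+1)^2\binom{n+r}{r-s+1}}-\frac{sH_n\left(H_{r-s+1}-H_{n+s-1}\right)}{(r-s+1)\binom{n+r}{r-s+1}}. \end{aligned} \]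
   Context: $\mathbb{Z}^{-}$ denotes the set of negative integers. For complex $z$ not a negative integer, $H_z=\psi(z+1)+\gamma$ ($\psi$ the digamma function, $\gamma$ Euler's constant); for integers $n\ge0$, $H_n=\sum_{j=1}^n 1/j$. The odd harmonic numbers are $O_n=\sum_{j=1}^n\frac{1}{2j-1}$ for integers $n\ge 0$ ($O_0=0$). Binomial coefficients with complex entries: $\binom{x}{y}=\frac{\Gamma(x+1)}{\Gamma(y+1)\Gamma(x-y+1)}$. *)

theory Defs
  imports "HOL-Analysis.Analysis"
begin

text \<open>Harmonic number at a complex argument: H_z = psi(z+1) + gamma.\<close>
definition Hc :: "complex \<Rightarrow> complex" where
  "Hc z = Digamma (z + 1) + euler_mascheroni"

definition oharm :: "nat \<Rightarrow> real" where
  "oharm n = (\<Sum>j=1..n. 1 / (2 * real j - 1))"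

definition cbinom :: "complex \<Rightarrow> complex \<Rightarrow> complex" where
  "cbinom x y = Gamma (x + 1) / (Gamma (y + 1) * Gamma (x - y + 1))"

definition negInts :: "complex set" where
  "negInts = {z. \<exists>m::nat. z = - of_nat (Suc m)}"

end

theory Submission imports Defs begin

definition hs :: "'a::real_normed_field \<Rightarrow> nat \<Rightarrow> 'a" where
  "hs x k = (\<Sum>j<k. 1 / (x + of_nat j))"

lemma hs_Suc: "hs c (Suc m) = 1 / c + hs (c + 1) m"
  unfolding hs_def by (subst sum.lessThan_Suc_shift) (simp add: add_ac)

lemma hs_Suc': "hs c (Suc m) = hs c m + 1 / (c + of_nat m)"
  unfolding hs_def by simp

lemma binom_diff:
  fixes f :: "nat \<Rightarrow> 'a::comm_ring_1"
  shows "(\<Sum>k\<le>Suc m. (-1)^k * of_nat (Suc m choose k) * f k)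
       = (\<Sum>k\<le>m. (-1)^k * of_nat (m choose k) * (f k - f (Suc k)))"
proof -
  have "(\<Sum>k\<le>Suc m. (-1)^k * of_nat (Suc m choose k) * f k)
      = f 0 + (\<Sum>k\<le>m. (-1)^(Suc k) * of_nat (Suc m choose Suc k) * f (Suc k))"
    by (subst sum.atMost_Suc_shift) simp
  also have "\<dots> = f 0 + (\<Sum>k\<le>m. (-1)^(Suc k) * of_nat (m choose k) * f (Suc k))
      + (\<Sum>k\<le>m. (-1)^(Suc k) * of_nat (m choose Suc k) * f (Suc k))"
    by (simp add: sum.distrib[symmetric] algebra_simps)
  also have "(\<Sum>k\<le>m. (-1)^(Suc k) * of_nat (m choose Suc k) * f (Suc k))
      = (\<Sum>k\<le>Suc m. (-1)^k * of_nat (m choose k) * f k) - f 0"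
    by (simp only: sum.atMost_Suc_shift[where n = m]) simp
  also have "(\<Sum>k\<le>Suc m. (-1)^k * of_nat (m choose k) * f k) = (\<Sum>k\<le>m. (-1)^k * of_nat (m choose k) * f k)"
    by (simp add: binomial_eq_0)
  finally have L: "(\<Sum>k\<le>Suc m. (-1)^k * of_nat (Suc m choose k) * f k) =
     (\<Sum>k\<le>m. (-1)^k * of_nat (m choose k) * f k) + (\<Sum>k\<le>m. (-1)^(Suc k) * of_nat (m choose k) * f (Suc k))"
    by simp
  have "(\<Sum>k\<le>m. (-1)^k * of_nat (m choose k) * (f k - f (Suc k))) =
     (\<Sum>k\<le>m. (-1)^k * of_nat (m choose k) * f k + (-1)^(Suc k) * of_nat (m choose k) * f (Suc k))"
    by (rule sum.cong) (simp_all add: algebra_simps)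
  then show ?thesis unfolding L by (simp add: sum.distrib sum_subtractf sum_negf)
qed

lemma P1:
  fixes a b :: "'a::real_normed_field"
  assumes "\<forall>k. pochhammer b k \<noteq> 0"
  shows "(\<Sum>k\<le>m. (-1)^k * of_nat (m choose k) * (pochhammer a k / pochhammer b k))
         = pochhammer (b - a) m / pochhammer b m"
  using assms
proof (induction m arbitrary: b)
  case 0 then show ?case by simp
next
  case (Suc m)
  have b0: "b \<noteq> 0" using Suc.prems[rule_format, of 1] by simp
  have nz: "\<forall>k. pochhammer (b+1) k \<noteq> 0"
  proof
    fix k show "pochhammer (b+1) k \<noteq> 0" using Suc.prems[rule_format, of "Suc k"] by (simp add: pochhammer_rec)
  qed
  have d: "pochhammer a k / pochhammer b k - pochhammer a (Suc k) / pochhammer b (Suc k)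
      = (b - a) / b * (pochhammer a k / pochhammer (b+1) k)" for k
  proof -
    have e1: "pochhammer b (Suc k) = (b + of_nat k) * pochhammer b k" by (rule pochhammer_rec')
    have e2: "pochhammer b (Suc k) = b * pochhammer (b+1) k" by (rule pochhammer_rec)
    have e3: "pochhammer b (Suc k) \<noteq> 0" using Suc.prems by blast
    have "pochhammer a k / pochhammer b k - pochhammer a (Suc k) / pochhammer b (Suc k)
        = pochhammer a k * (b + of_nat k) / pochhammer b (Suc k) - (a + of_nat k) * pochhammer a k / pochhammer b (Suc k)"
      using e3 unfolding e1 by (simp add: pochhammer_rec')
    also have "\<dots> = (b - a) * pochhammer a k / pochhammer b (Suc k)"
      by (simp add: diff_divide_distrib[symmetric] algebra_simps)
    also have "\<dots> = (b - a) / b * (pochhammer a k / pochhammer (b+1) k)"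
      unfolding e2 by simp
    finally show ?thesis .
  qed
  have "(\<Sum>k\<le>Suc m. (-1)^k * of_nat (Suc m choose k) * (pochhammer a k / pochhammer b k))
     = (\<Sum>k\<le>m. (-1)^k * of_nat (m choose k) * ((b - a) / b * (pochhammer a k / pochhammer (b+1) k)))"
    by (subst binom_diff) (simp add: d)
  also have "\<dots> = (b - a) / b * (\<Sum>k\<le>m. (-1)^k * of_nat (m choose k) * (pochhammer a k / pochhammer (b+1) k))"
    by (simp add: sum_distrib_left algebra_simps)
  also have "\<dots> = (b - a) / b * (pochhammer (b + 1 - a) m / pochhammer (b+1) m)"
    using Suc.IH[OF nz] by (simp add: algebra_simps)
  also have "\<dots> = pochhammer (b - a) (Suc m) / pochhammer b (Suc m)"
    using b0 by (simp add: pochhammer_rec algebra_simps)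
  finally show ?case .
qed

lemma gdiff:
  fixes a b :: "'a::real_normed_field"
  assumes "pochhammer b (Suc k) \<noteq> 0"
  shows "pochhammer a k / pochhammer b k - pochhammer a (Suc k) / pochhammer b (Suc k)
      = (b - a) / b * (pochhammer a k / pochhammer (b+1) k)"
  and "pochhammer a (Suc k) / pochhammer b (Suc k) * (1 / (a + of_nat k)) = 
       (if a + of_nat k = 0 then 0 else 1 / b * (pochhammer a k / pochhammer (b+1) k))"
proof -
    have e1: "pochhammer b (Suc k) = (b + of_nat k) * pochhammer b k" by (rule pochhammer_rec')
    have e2: "pochhammer b (Suc k) = b * pochhammer (b+1) k" by (rule pochhammer_rec)
    have e3: "pochhammer b (Suc k) \<noteq> 0" using assms by blast
    have "pochhammer a k / pochhammer b k - pochhammer a (Suc k) / pochhammer b (Suc k)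
        = pochhammer a k * (b + of_nat k) / pochhammer b (Suc k) - (a + of_nat k) * pochhammer a k / pochhammer b (Suc k)"
      using e3 unfolding e1 by (simp add: pochhammer_rec')
    also have "\<dots> = (b - a) * pochhammer a k / pochhammer b (Suc k)"
      by (simp add: diff_divide_distrib[symmetric] algebra_simps)
    also have "\<dots> = (b - a) / b * (pochhammer a k / pochhammer (b+1) k)"
      unfolding e2 by simp
    finally show "pochhammer a k / pochhammer b k - pochhammer a (Suc k) / pochhammer b (Suc k)
      = (b - a) / b * (pochhammer a k / pochhammer (b+1) k)" .
    show "pochhammer a (Suc k) / pochhammer b (Suc k) * (1 / (a + of_nat k)) = 
       (if a + of_nat k = 0 then 0 else 1 / b * (pochhammer a k / pochhammer (b+1) k))"
      unfolding e2 by (simp add: pochhammer_rec')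
qed

lemma P2:
  fixes a b :: "'a::real_normed_field"
  assumes "\<forall>k. pochhammer b k \<noteq> 0" "\<forall>k. pochhammer a k \<noteq> 0" "\<forall>k. pochhammer (b - a) k \<noteq> 0"
  shows "(\<Sum>k\<le>m. (-1)^k * of_nat (m choose k) * (pochhammer a k / pochhammer b k * hs a k))
         = - (pochhammer (b - a) m / pochhammer b m) * hs (b - a) m"
  using assms(1,3)
proof (induction m arbitrary: b)
  case 0 then show ?case by (simp add: hs_def)
next
  case (Suc m)
  have b0: "b \<noteq> 0" using Suc.prems(1)[rule_format, of 1] by simp
  have ba0: "b - a \<noteq> 0" using Suc.prems(2)[rule_format, of 1] by simp
  have nz: "\<forall>k. pochhammer (b+1) k \<noteq> 0"
  proof
    fix k show "pochhammer (b+1) k \<noteq> 0" using Suc.prems(1)[rule_format, of "Suc k"] by (simp add: pochhammer_rec)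
  qed
  have eqba: "b + 1 - a = (b - a) + 1" by simp
  have nz2: "\<forall>k. pochhammer (b+1-a) k \<noteq> 0"
  proof
    fix k show "pochhammer (b+1-a) k \<noteq> 0" unfolding eqba using Suc.prems(2)[rule_format, of "Suc k"] by (simp add: pochhammer_rec)
  qed
  have ak: "a + of_nat k \<noteq> 0" for k using assms(2)[rule_format, of "Suc k"] by (simp add: pochhammer_rec')
  define g' where "g' k = pochhammer a k / pochhammer (b+1) k" for k
  have d: "pochhammer a k / pochhammer b k * hs a k - pochhammer a (Suc k) / pochhammer b (Suc k) * hs a (Suc k)
      = (b - a) / b * (g' k * hs a k) - 1 / b * g' k" for k
  proof -
    have p: "pochhammer b (Suc k) \<noteq> 0" using Suc.prems by blast
    have "pochhammer a k / pochhammer b k * hs a k - pochhammer a (Suc k) / pochhammer b (Suc k) * hs a (Suc k)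
       = (pochhammer a k / pochhammer b k - pochhammer a (Suc k) / pochhammer b (Suc k)) * hs a k
         - pochhammer a (Suc k) / pochhammer b (Suc k) * (1 / (a + of_nat k))"
      unfolding hs_Suc' by (simp add: algebra_simps)
    also have "\<dots> = (b - a) / b * (g' k * hs a k) - 1 / b * g' k"
      unfolding gdiff[OF p] g'_def using ak[of k] by simp
    finally show ?thesis .
  qed
  have "(\<Sum>k\<le>Suc m. (-1)^k * of_nat (Suc m choose k) * (pochhammer a k / pochhammer b k * hs a k))
     = (\<Sum>k\<le>m. (-1)^k * of_nat (m choose k) * ((b - a) / b * (g' k * hs a k) - 1 / b * g' k))"
    by (subst binom_diff) (simp only: d)
  also have "\<dots> = (b - a) / b * (\<Sum>k\<le>m. (-1)^k * of_nat (m choose k) * (g' k * hs a k))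
       - 1 / b * (\<Sum>k\<le>m. (-1)^k * of_nat (m choose k) * g' k)"
    by (simp add: sum_distrib_left sum_subtractf algebra_simps)
  also have "\<dots> = (b - a) / b * (- (pochhammer (b + 1 - a) m / pochhammer (b+1) m) * hs (b + 1 - a) m)
       - 1 / b * (pochhammer (b + 1 - a) m / pochhammer (b+1) m)"
    using Suc.IH[OF nz nz2] P1[OF nz, where a=a and m=m] unfolding g'_def by simp
  also have "\<dots> = - (pochhammer (b - a) (Suc m) / pochhammer b (Suc m)) * hs (b - a) (Suc m)"
    unfolding eqba hs_Suc using b0 ba0 nz[rule_format, of m] by (simp add: pochhammer_rec field_simps)
  finally show ?case .
qed


lemma Kid:
  shows "(\<Sum>j=1..n. of_nat ((n-j) choose k) / of_nat j :: 'a::real_normed_field)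
       = of_nat (n choose k) * (harm n - harm k)"
proof (induction n arbitrary: k)
  case 0 then show ?case by (cases k) (simp_all add: harm_def)
next
  case (Suc n)
  show ?case
  proof (cases k)
    case 0
    then show ?thesis by (simp add: harm_def divide_inverse)
  next
    case (Suc k')
    have "(\<Sum>j=1..Suc n. of_nat ((Suc n-j) choose k) / of_nat j :: 'a)
       = (\<Sum>j=1..n. of_nat ((Suc n-j) choose k) / of_nat j)"
      by (simp add: sum.cl_ivl_Suc Suc)
    also have "\<dots> = (\<Sum>j=1..n. of_nat ((n-j) choose k') / of_nat j + of_nat ((n-j) choose k) / of_nat j)"
    proof (rule sum.cong[OF refl])
      fix j assume "j \<in> {1..n}"
      then have "Suc n - j = Suc (n - j)" by auto
      then show "of_nat ((Suc n-j) choose k) / of_nat j = (of_nat ((n-j) choose k') / of_nat j + of_nat ((n-j) choose k) / of_nat j :: 'a)"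
        by (simp add: Suc add_divide_distrib)
    qed
    also have "\<dots> = of_nat (n choose k') * (harm n - harm k') + of_nat (n choose k) * (harm n - harm k)"
      by (simp only: sum.distrib Suc.IH)
    also have "\<dots> = of_nat (Suc n choose k) * (harm (Suc n) - harm k)"
    proof -
      have e: "of_nat (Suc k') * (of_nat (Suc n choose Suc k') :: 'a) = of_nat (Suc n) * of_nat (n choose k')"
        by (metis Suc_times_binomial of_nat_mult)
      have nz1: "(of_nat (Suc k') :: 'a) \<noteq> 0" by (metis of_nat_eq_0_iff nat.distinct(1))
      have nz2: "(of_nat (Suc n) :: 'a) \<noteq> 0" by (metis of_nat_eq_0_iff nat.distinct(1))
      have e2: "(of_nat (Suc n choose Suc k') :: 'a) / of_nat (Suc n) = of_nat (n choose k') / of_nat (Suc k')"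
        using e nz1 nz2 by (simp add: field_simps)
      show ?thesis unfolding Suc harm_Suc using e2
        by (simp add: field_simps del: of_nat_Suc)
    qed
    finally show ?thesis .
  qed
qed

lemma L1:
  fixes a :: "nat \<Rightarrow> 'a::real_normed_field"
  defines "B \<equiv> \<lambda>m. (\<Sum>k\<le>m. (-1)^k * of_nat (m choose k) * a k)"
  shows "(\<Sum>k\<le>n. (-1)^k * of_nat (n choose k) * harm k * a k)
       = harm n * B n - (\<Sum>j=1..n. B (n - j) / of_nat j)"
proof -
  have "(\<Sum>j=1..n. B (n - j) / of_nat j) = (\<Sum>j=1..n. \<Sum>k\<le>n. (-1)^k * a k * (of_nat ((n-j) choose k) / of_nat j))"
  proof (rule sum.cong[OF refl])
    fix j assume "j \<in> {1..n}"
    have "B (n - j) = (\<Sum>k\<le>n. (-1)^k * of_nat ((n-j) choose k) * a k)"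
      unfolding B_def by (rule sum.mono_neutral_left) (auto simp: binomial_eq_0)
    then show "B (n - j) / of_nat j = (\<Sum>k\<le>n. (-1)^k * a k * (of_nat ((n-j) choose k) / of_nat j))"
      by (simp add: sum_divide_distrib algebra_simps)
  qed
  also have "\<dots> = (\<Sum>k\<le>n. (-1)^k * a k * (\<Sum>j=1..n. of_nat ((n-j) choose k) / of_nat j))"
    by (subst sum.swap) (simp add: sum_distrib_left)
  also have "\<dots> = (\<Sum>k\<le>n. (-1)^k * a k * (of_nat (n choose k) * (harm n - harm k)))"
    by (simp only: Kid)
  finally have "(\<Sum>j=1..n. B (n - j) / of_nat j) = (\<Sum>k\<le>n. (-1)^k * a k * (of_nat (n choose k) * (harm n - harm k)))" .
  moreover have "harm n * B n = (\<Sum>k\<le>n. (-1)^k * a k * (of_nat (n choose k) * harm n))"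
    unfolding B_def by (simp add: sum_distrib_left algebra_simps)
  ultimately show ?thesis
    by (simp add: sum_subtractf[symmetric] algebra_simps)
qed


lemma npi_shift: "z \<notin> \<int>\<^sub>\<le>\<^sub>0 \<Longrightarrow> z + of_nat k \<notin> \<int>\<^sub>\<le>\<^sub>0"
proof
  assume z: "z \<notin> \<int>\<^sub>\<le>\<^sub>0" and "z + of_nat k \<in> \<int>\<^sub>\<le>\<^sub>0"
  then obtain n where "z + of_nat k = - of_nat n" by (auto elim!: nonpos_Ints_cases')
  then have "z + of_nat (k + n) = 0" by (simp add: algebra_simps eq_neg_iff_add_eq_0)
  then show False using z plus_of_nat_eq_0_imp by blast
qed

lemma Digamma_shift:
  fixes z :: complex
  assumes "z \<notin> \<int>\<^sub>\<le>\<^sub>0"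
  shows "Digamma (z + of_nat k) = Digamma z + hs z k"
proof (induction k)
  case 0 then show ?case by (simp add: hs_def)
next
  case (Suc k)
  have "z + of_nat k \<noteq> 0" using npi_shift[OF assms, of k] by auto
  then have "Digamma (z + of_nat k + 1) = Digamma (z + of_nat k) + 1 / (z + of_nat k)"
    by (rule Digamma_plus1)
  then show ?case using Suc by (simp add: hs_Suc' add_ac)
qed

lemma Gamma_shift:
  fixes z :: complex
  assumes "z \<notin> \<int>\<^sub>\<le>\<^sub>0"
  shows "Gamma (z + of_nat k) = pochhammer z k * Gamma z"
  using pochhammer_Gamma[OF assms, of k] Gamma_nonzero[OF assms] by (simp add: field_simps)

lemma poch_nz: 
  fixes z :: "'a::real_normed_field"
  shows "z \<notin> \<int>\<^sub>\<le>\<^sub>0 \<Longrightarrow> pochhammer z k \<noteq> 0"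
  by (auto simp: pochhammer_eq_0_iff)

lemma negInts_npi: "z \<notin> negInts \<Longrightarrow> z + 1 \<notin> \<int>\<^sub>\<le>\<^sub>0"
proof
  assume z: "z \<notin> negInts" and "z + 1 \<in> \<int>\<^sub>\<le>\<^sub>0"
  then obtain n where "z + 1 = - of_nat n" by (auto elim!: nonpos_Ints_cases')
  then have "z = - of_nat (Suc n)" by (simp add: algebra_simps eq_neg_iff_add_eq_0)
  then show False using z unfolding negInts_def by blast
qed

lemma negInts_npi0: "z \<notin> negInts \<Longrightarrow> z \<noteq> 0 \<Longrightarrow> z \<notin> \<int>\<^sub>\<le>\<^sub>0"
proof
  assume z: "z \<notin> negInts" "z \<noteq> 0" and "z \<in> \<int>\<^sub>\<le>\<^sub>0"
  then obtain n where n: "z = - of_nat n" by (auto elim!: nonpos_Ints_cases')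
  with z have "n \<noteq> 0" by auto
  then obtain m where "n = Suc m" by (cases n) auto
  then show False using z n unfolding negInts_def by blast
qed

lemma part2_B:
  fixes r s :: complex
  assumes r: "r \<notin> negInts" and s: "s \<notin> negInts" "s \<noteq> 0" and rs: "r - s \<notin> negInts"
  shows "(\<Sum>k\<le>m. (-1)^k * of_nat (m choose k) *
            ((Hc (of_nat k + r - s) - Hc s) / cbinom (of_nat k + r) s))
       = - ((r + 1) / ((r - s + 1)^2 * cbinom (of_nat m + r) (r - s + 1))
            - s * (Hc (r - s + 1) - Hc (of_nat m + s - 1)) / ((r - s + 1) * cbinom (of_nat m + r) (r - s + 1)))"
proof -
  define \<alpha> where "\<alpha> = r - s + 1"
  define \<beta> where "\<beta> = r + 1"
  have a_npi: "\<alpha> \<notin> \<int>\<^sub>\<le>\<^sub>0" unfolding \<alpha>_def using negInts_npi[OF rs] by simp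
  have b_npi: "\<beta> \<notin> \<int>\<^sub>\<le>\<^sub>0" unfolding \<beta>_def using negInts_npi[OF r] .
  have s_npi: "s \<notin> \<int>\<^sub>\<le>\<^sub>0" using negInts_npi0[OF s] .
  have s1_npi: "s + 1 \<notin> \<int>\<^sub>\<le>\<^sub>0" using npi_shift[OF s_npi, of 1] by simp
  have ba: "\<beta> - \<alpha> = s" unfolding \<alpha>_def \<beta>_def by simp
  have a0: "\<alpha> \<noteq> 0" using a_npi by auto
  have s0: "s \<noteq> 0" using s by simp
  have Gb: "Gamma \<beta> \<noteq> 0" using Gamma_nonzero[OF b_npi] .
  have Gs: "Gamma s \<noteq> 0" using Gamma_nonzero[OF s_npi] .
  have Ga: "Gamma \<alpha> \<noteq> 0" using Gamma_nonzero[OF a_npi] .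
  have pb: "\<forall>k. pochhammer \<beta> k \<noteq> 0" using poch_nz[OF b_npi] by blast
  have pa: "\<forall>k. pochhammer \<alpha> k \<noteq> 0" using poch_nz[OF a_npi] by blast
  have ps: "\<forall>k. pochhammer (\<beta> - \<alpha>) k \<noteq> 0" unfolding ba using poch_nz[OF s_npi] by blast
  define c0 where "c0 = Gamma (s + 1) * Gamma \<alpha> / Gamma \<beta>"
  define D where "D = Digamma \<alpha> - Digamma (s + 1)"
  have ak: "(Hc (of_nat k + r - s) - Hc s) / cbinom (of_nat k + r) s
        = c0 * (pochhammer \<alpha> k / pochhammer \<beta> k * hs \<alpha> k) + c0 * D * (pochhammer \<alpha> k / pochhammer \<beta> k)" for k
  proof -
    have e1: "of_nat k + r - s + 1 = \<alpha> + of_nat k" unfolding \<alpha>_def by simp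
    have e2: "of_nat k + r + 1 = \<beta> + of_nat k" unfolding \<beta>_def by simp
    have e3: "of_nat k + r - s + 1 = \<alpha> + of_nat k" unfolding \<alpha>_def by simp
    have "Hc (of_nat k + r - s) - Hc s = hs \<alpha> k + D"
      unfolding Hc_def e1 Digamma_shift[OF a_npi] D_def by simp
    moreover have "1 / cbinom (of_nat k + r) s = c0 * (pochhammer \<alpha> k / pochhammer \<beta> k)"
      unfolding cbinom_def e2 e3 c0_def Gamma_shift[OF a_npi] Gamma_shift[OF b_npi]
      using Gb pb by (simp add: field_simps)
    ultimately show ?thesis by (simp add: divide_inverse algebra_simps)
  qed
  have "(\<Sum>k\<le>m. (-1)^k * of_nat (m choose k) *
            ((Hc (of_nat k + r - s) - Hc s) / cbinom (of_nat k + r) s))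
     = c0 * (\<Sum>k\<le>m. (-1)^k * of_nat (m choose k) * (pochhammer \<alpha> k / pochhammer \<beta> k * hs \<alpha> k))
       + c0 * D * (\<Sum>k\<le>m. (-1)^k * of_nat (m choose k) * (pochhammer \<alpha> k / pochhammer \<beta> k))"
    unfolding ak by (simp add: sum_distrib_left sum.distrib algebra_simps)
  also have "\<dots> = c0 * (- (pochhammer s m / pochhammer \<beta> m) * hs s m) + c0 * D * (pochhammer s m / pochhammer \<beta> m)"
    using P2[OF pb pa ps, where m=m] P1[OF pb, where a="\<alpha>" and m=m] unfolding ba by simp
  finally have LHS: "(\<Sum>k\<le>m. (-1)^k * of_nat (m choose k) *
            ((Hc (of_nat k + r - s) - Hc s) / cbinom (of_nat k + r) s))
     = c0 * (- (pochhammer s m / pochhammer \<beta> m) * hs s m) + c0 * D * (pochhammer s m / pochhammer \<beta> m)" .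
  have invC: "1 / cbinom (of_nat m + r) \<alpha> = \<alpha> * Gamma \<alpha> * (pochhammer s m * Gamma s) / (pochhammer \<beta> m * Gamma \<beta>)"
  proof -
    have e1: "of_nat m + r + 1 = \<beta> + of_nat m" unfolding \<beta>_def by simp
    have e2: "of_nat m + r - \<alpha> + 1 = s + of_nat m" unfolding \<alpha>_def by simp
    show ?thesis unfolding cbinom_def e1 e2 Gamma_shift[OF b_npi] Gamma_shift[OF s_npi] Gamma_plus1[OF a_npi]
      by simp
  qed
  have H1: "Hc \<alpha> = Digamma \<alpha> + 1 / \<alpha> + euler_mascheroni"
    unfolding Hc_def using Digamma_plus1[OF a0] by simp
  have H2: "Hc (of_nat m + s - 1) = Digamma s + hs s m + euler_mascheroni"
    unfolding Hc_def using Digamma_shift[OF s_npi, of m] by (simp add: add_ac)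
  have H3: "Digamma (s + 1) = Digamma s + 1 / s" using Digamma_plus1[OF s0] .
  have G3: "Gamma (s + 1) = s * Gamma s" using Gamma_plus1[OF s_npi] .
  have r1: "r + 1 = \<alpha> + s" unfolding \<alpha>_def by simp
  have RHS: "(r + 1) / (\<alpha>^2 * cbinom (of_nat m + r) \<alpha>)
            - s * (Hc \<alpha> - Hc (of_nat m + s - 1)) / (\<alpha> * cbinom (of_nat m + r) \<alpha>)
        = ((r + 1) / \<alpha>^2 - s * (Hc \<alpha> - Hc (of_nat m + s - 1)) / \<alpha>) * (1 / cbinom (of_nat m + r) \<alpha>)"
    by (simp add: divide_inverse algebra_simps)
  have "c0 * (- (pochhammer s m / pochhammer \<beta> m) * hs s m) + c0 * D * (pochhammer s m / pochhammer \<beta> m)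
     = - (((r + 1) / \<alpha>^2 - s * (Hc \<alpha> - Hc (of_nat m + s - 1)) / \<alpha>) * (1 / cbinom (of_nat m + r) \<alpha>))"
    unfolding invC H1 H2 r1 c0_def D_def H3 G3
    using a0 s0 Gb pb by (simp add: field_simps power2_eq_square)
  then show ?thesis unfolding LHS using RHS unfolding \<alpha>_def by simp
qed


lemma aux1:
  fixes p q C t X Y k :: "'a::field"
  shows "(p / (q^2 * C) - t * (Y - X) / (q * C)) / k = p / q^2 * (1 / (k * C)) + t / q * ((X - Y) / (k * C))"
  by (simp add: divide_inverse inverse_mult_distrib algebra_simps)

lemma aux2:
  fixes p q C t X Y h S1 S2 :: "'a::field"
  shows "h * (p / (q^2 * C) - t * (Y - X) / (q * C)) - (p / q^2 * S1 + t / q * S2)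
     = - p / q^2 * S1 - t / q * S2 + p * h / (q^2 * C) - t * h * (Y - X) / (q * C)"
  by (simp add: divide_inverse inverse_mult_distrib algebra_simps)

lemma part2:
  fixes r s :: complex and n :: nat
  assumes r: "r \<notin> negInts" and s: "s \<notin> negInts" "s \<noteq> 0" and rs: "r - s \<notin> negInts"
  shows "(\<Sum>k=1..n. (-1)^(k-1) * of_nat (n choose k) * harm k
         * (Hc (of_nat k + r - s) - Hc s) / cbinom (of_nat k + r) s)
     = - (r + 1) / (r - s + 1)^2
         * (\<Sum>k=1..n. 1 / (of_nat k * cbinom (of_nat (n-k) + r) (r - s + 1)))
       - s / (r - s + 1)
         * (\<Sum>k=1..n. (Hc (of_nat (n-k) + s - 1) - Hc (r - s + 1))
              / (of_nat k * cbinom (of_nat (n-k) + r) (r - s + 1)))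
       + (r + 1) * harm n / ((r - s + 1)^2 * cbinom (of_nat n + r) (r - s + 1))
       - s * harm n * (Hc (r - s + 1) - Hc (of_nat n + s - 1))
           / ((r - s + 1) * cbinom (of_nat n + r) (r - s + 1))" (is "_ = ?rhs")
proof -
  define a where "a k = (Hc (of_nat k + r - s) - Hc s) / cbinom (of_nat k + r) s" for k
  define F where "F m = (r + 1) / ((r - s + 1)^2 * cbinom (of_nat m + r) (r - s + 1))
            - s * (Hc (r - s + 1) - Hc (of_nat m + s - 1)) / ((r - s + 1) * cbinom (of_nat m + r) (r - s + 1))" for m
  have BF: "(\<Sum>k\<le>m. (-1)^k * of_nat (m choose k) * a k) = - F m" for m
    unfolding a_def F_def by (rule part2_B[OF r s rs])
  have "(\<Sum>k=1..n. (-1)^(k-1) * of_nat (n choose k) * harm k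
         * (Hc (of_nat k + r - s) - Hc s) / cbinom (of_nat k + r) s)
     = (\<Sum>k=1..n. - ((-1)^k * of_nat (n choose k) * harm k * a k))"
  proof (rule sum.cong[OF refl])
    fix k assume "k \<in> {1..n}"
    then obtain j where k: "k = Suc j" by (cases k) auto
    show "(-1)^(k-1) * of_nat (n choose k) * harm k
         * (Hc (of_nat k + r - s) - Hc s) / cbinom (of_nat k + r) s = - ((-1)^k * of_nat (n choose k) * harm k * a k)"
      unfolding a_def k by simp
  qed
  also have "\<dots> = - (\<Sum>k\<le>n. (-1)^k * of_nat (n choose k) * harm k * a k)"
  proof -
    have "(\<Sum>k\<le>n. (-1)^k * of_nat (n choose k) * harm k * a k) = (\<Sum>k=1..n. (-1)^k * of_nat (n choose k) * harm k * a k)"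
      by (rule sum.mono_neutral_right) (auto simp: harm_def)
    then show ?thesis by (simp add: sum_negf)
  qed
  also have "\<dots> = harm n * F n - (\<Sum>j=1..n. F (n - j) / of_nat j)"
    unfolding L1 BF by (simp add: sum_negf)
  also have "\<dots> = ?rhs"
  proof -
    have "(\<Sum>j=1..n. F (n - j) / of_nat j) = (r + 1) / (r - s + 1)^2
         * (\<Sum>k=1..n. 1 / (of_nat k * cbinom (of_nat (n-k) + r) (r - s + 1)))
       + s / (r - s + 1)
         * (\<Sum>k=1..n. (Hc (of_nat (n-k) + s - 1) - Hc (r - s + 1))
              / (of_nat k * cbinom (of_nat (n-k) + r) (r - s + 1)))"
      unfolding sum_distrib_left sum.distrib[symmetric]
      by (rule sum.cong[OF refl]) (simp only: F_def aux1)
    then show ?thesis unfolding F_def by (simp only: aux2)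
  qed
  finally show ?thesis .
qed


definition uu :: "nat \<Rightarrow> real" where "uu k = real ((2*k) choose k) / 2^(2*k)"

lemma uu_poch: "uu k = pochhammer (1/2) k / fact k"
proof -
  have "real ((2*k) choose k) = fact (2*k) / (fact k * fact k)"
    using binomial_fact[of k "2*k"] by simp
  also have "\<dots> = 2 ^ (2 * k) * pochhammer (1 / 2) k / fact k"
    unfolding fact_double by simp
  finally show ?thesis unfolding uu_def by simp
qed

lemma uu_Suc: "uu (Suc i) = (1/2) * (pochhammer (3/2) i / pochhammer 2 i)"
proof -
  have A: "pochhammer (1/2::real) (Suc i) = 1/2 * pochhammer (3/2) i"
    by (simp add: pochhammer_rec)
  have B: "fact (Suc i) = (pochhammer 2 i :: real)"
    by (simp add: pochhammer_fact pochhammer_rec del: fact_Suc)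
  show ?thesis unfolding uu_poch A B by simp
qed

lemma uu_Suc2: "2 * real (Suc k) * uu (Suc k) = (2 * real k + 1) * uu k"
proof -
  have A: "pochhammer (1/2::real) (Suc k) = (1/2 + real k) * pochhammer (1/2) k"
    by (simp add: pochhammer_rec')
  have B: "(fact (Suc k) :: real) = real (Suc k) * fact k" by (rule fact_Suc)
  have nz: "real (Suc k) \<noteq> 0" "(fact k :: real) \<noteq> 0" by simp_all
  have "2 * real (Suc k) * uu (Suc k) = 2 * real (Suc k) * ((1/2 + real k) * pochhammer (1/2) k / (real (Suc k) * fact k))"
    unfolding uu_poch A B ..
  also have "\<dots> = (2 * real k + 1) * (pochhammer (1/2) k / fact k)"
    using nz by (simp only: field_simps) simp
  finally show ?thesis unfolding uu_poch .
qed

lemma oharm_Suc: "oharm (Suc i) = oharm i + 1 / (2 * real i + 1)"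
  unfolding oharm_def by simp

lemma oharm_hs: "oharm (Suc i) = 1 + hs (3/2) i / 2"
proof (induction i)
  case 0 then show ?case by (simp add: oharm_def hs_def)
next
  case (Suc i)
  have "1 / (3/2 + real i) / 2 = 1 / (2 * real (Suc i) + 1)" by (simp add: field_simps)
  then show ?case unfolding oharm_Suc[of "Suc i"] Suc hs_Suc' by (simp add: add_divide_distrib)
qed

lemma hs_half: "hs (1/2) M = 2 * oharm M"
proof (induction M)
  case 0 then show ?case by (simp add: oharm_def hs_def)
next
  case (Suc M)
  have "1 / (1/2 + real M) = 2 * (1 / (2 * real M + 1))" by (simp add: field_simps)
  then show ?case unfolding oharm_Suc hs_Suc' Suc by simp
qed

lemma S_lemma: "(\<Sum>i\<le>M. (-1)^i * of_nat (M choose i) * (uu (Suc i) * oharm (Suc i)))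
    = - uu M * (oharm M - 1) / (2 * (real M + 1))"
proof -
  define g where "g i = (pochhammer (3/2) i / pochhammer 2 i :: real)" for i
  have pb: "\<forall>k. pochhammer (2::real) k \<noteq> 0" by (simp add: pochhammer_pos less_imp_neq[symmetric])
  have pa: "\<forall>k. pochhammer (3/2::real) k \<noteq> 0" by (simp add: pochhammer_pos less_imp_neq[symmetric])
  have pba: "\<forall>k. pochhammer (2 - 3/2::real) k \<noteq> 0" by (simp add: pochhammer_pos less_imp_neq[symmetric])
  have t: "uu (Suc i) * oharm (Suc i) = 1/2 * g i + 1/4 * (g i * hs (3/2) i)" for i
    unfolding uu_Suc oharm_hs g_def using pb[rule_format, of i] by (simp add: field_simps)
  have "(\<Sum>i\<le>M. (-1)^i * of_nat (M choose i) * (uu (Suc i) * oharm (Suc i)))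
     = 1/2 * (\<Sum>i\<le>M. (-1)^i * of_nat (M choose i) * g i) + 1/4 * (\<Sum>i\<le>M. (-1)^i * of_nat (M choose i) * (g i * hs (3/2) i))"
    unfolding t by (simp add: sum_distrib_left sum.distrib algebra_simps)
  also have "\<dots> = 1/2 * (pochhammer (1/2) M / pochhammer 2 M) + 1/4 * (- (pochhammer (1/2) M / pochhammer 2 M) * hs (1/2) M)"
    using P1[OF pb, where a="3/2" and m=M] P2[OF pb pa pba, where m=M] unfolding g_def by simp
  also have "pochhammer (1/2) M / pochhammer 2 M = uu M / (real M + 1)"
  proof -
    have "fact (Suc M) = (pochhammer 2 M :: real)"
      by (simp add: pochhammer_fact pochhammer_rec del: fact_Suc)
    then have e: "pochhammer 2 M = (real M + 1) * fact M" by (simp add: add.commute)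
    show ?thesis unfolding uu_poch e by simp
  qed
  finally have X: "(\<Sum>i\<le>M. (-1)^i * of_nat (M choose i) * (uu (Suc i) * oharm (Suc i)))
     = 1/2 * (uu M / (real M + 1)) + 1/4 * (- (uu M / (real M + 1)) * (2 * oharm M))" unfolding hs_half .
  have Y: "- uu M * (oharm M - 1) / (2 * (real M + 1)) = - (oharm M - 1) / 2 * (uu M / (real M + 1))"
    by (simp add: minus_divide_left[symmetric] algebra_simps)
  show ?thesis unfolding X Y by (simp add: algebra_simps add_divide_distrib[symmetric])
qed


lemma aux3:
  fixes N h c p X S :: "'a::field"
  shows "- (1 / N) * (h * (c / p * X) - S) = - c / (p * N) * h * X + 1 / N * S"
  by (simp add: divide_inverse inverse_mult_distrib algebra_simps)

definition cc :: "nat \<Rightarrow> real" where "cc j = 2 * real j * uu j * oharm j"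

lemma Bi: "(\<Sum>j\<le>Suc M. (-1)^j * of_nat (Suc M choose j) * cc j) = uu M * (oharm M - 1)"
proof -
  have "(\<Sum>j\<le>Suc M. (-1)^j * of_nat (Suc M choose j) * cc j)
      = (\<Sum>i\<le>M. (-1)^(Suc i) * of_nat (Suc M choose Suc i) * cc (Suc i))"
    by (subst sum.atMost_Suc_shift) (simp add: cc_def)
  also have "\<dots> = (\<Sum>i\<le>M. (- 2 * (real M + 1)) * ((-1)^i * of_nat (M choose i) * (uu (Suc i) * oharm (Suc i))))"
  proof (rule sum.cong[OF refl])
    fix i
    have e: "real (Suc i) * real (Suc M choose Suc i) = real (Suc M) * real (M choose i)"
      by (metis Suc_times_binomial of_nat_mult)
    show "(-1)^(Suc i) * of_nat (Suc M choose Suc i) * cc (Suc i)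
        = (- 2 * (real M + 1)) * ((-1)^i * of_nat (M choose i) * (uu (Suc i) * oharm (Suc i)))"
    proof -
      have "(-1)^(Suc i) * of_nat (Suc M choose Suc i) * cc (Suc i)
         = - 2 * (-1)^i * (real (Suc i) * real (Suc M choose Suc i)) * (uu (Suc i) * oharm (Suc i))"
        unfolding cc_def by (simp only: power_Suc mult_ac)
      also have "\<dots> = - 2 * (-1)^i * (real (Suc M) * real (M choose i)) * (uu (Suc i) * oharm (Suc i))"
        unfolding e ..
      also have "\<dots> = (- 2 * (real M + 1)) * ((-1)^i * of_nat (M choose i) * (uu (Suc i) * oharm (Suc i)))"
        by (simp only: of_nat_Suc mult_ac) simp
      finally show ?thesis .
    qed
  qed
  also have "\<dots> = (- 2 * (real M + 1)) * (- uu M * (oharm M - 1) / (2 * (real M + 1)))"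
    unfolding S_lemma[symmetric] by (simp add: sum_distrib_left)
  also have "\<dots> = uu M * (oharm M - 1)"
  proof -
    have "real M + 1 \<noteq> 0" by simp
    then show ?thesis by (simp add: field_simps)
  qed
  finally show ?thesis .
qed

lemma part1:
  fixes n :: nat
  shows "(\<Sum>k=0..n. (-1)^k * (2 * real k + 1) / (2^(2*k) * (real k + 1))
         * real (n choose k) * real ((2*k) choose k) * harm (k+1) * oharm (k+1))
     = - real ((2*n) choose n) / (2^(2*n) * (real n + 1)) * harm (n+1) * (oharm n - 1)
       + 1 / (real n + 1) * (\<Sum>k=1..n. real ((2*(n-k)) choose (n-k))
            / (2^(2*(n-k)) * real k) * (oharm (n-k) - 1))"
proof -
  define B where "B m = (\<Sum>j\<le>m. (-1)^j * of_nat (m choose j) * cc j)" for m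
  have B0: "B 0 = 0" unfolding B_def cc_def by simp
  have BS: "B (Suc m) = uu m * (oharm m - 1)" for m unfolding B_def by (rule Bi)
  have n1: "real n + 1 \<noteq> 0" by simp
  have "(\<Sum>k=0..n. (-1)^k * (2 * real k + 1) / (2^(2*k) * (real k + 1))
         * real (n choose k) * real ((2*k) choose k) * harm (k+1) * oharm (k+1))
      = (\<Sum>k\<le>n. - (1 / (real n + 1)) * ((-1)^(Suc k) * of_nat (Suc n choose Suc k) * harm (Suc k) * cc (Suc k)))"
    unfolding atLeast0AtMost
  proof (rule sum.cong[OF refl])
    fix k
    have e: "real (Suc k) * real (Suc n choose Suc k) = real (Suc n) * real (n choose k)"
      by (metis Suc_times_binomial of_nat_mult)
    have e2: "real (Suc n choose Suc k) / (real n + 1) = real (n choose k) / (real k + 1)"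
      using e n1 by (simp add: field_simps)
    have c: "cc (Suc k) = (2 * real k + 1) * uu k * oharm (Suc k)"
      unfolding cc_def using uu_Suc2[of k] by simp
    show "(-1)^k * (2 * real k + 1) / (2^(2*k) * (real k + 1))
         * real (n choose k) * real ((2*k) choose k) * harm (k+1) * oharm (k+1)
       = - (1 / (real n + 1)) * ((-1)^(Suc k) * of_nat (Suc n choose Suc k) * harm (Suc k) * cc (Suc k))"
    proof -
      have "- (1 / (real n + 1)) * ((-1)^(Suc k) * of_nat (Suc n choose Suc k) * harm (Suc k) * cc (Suc k))
          = (-1)^k * (real (Suc n choose Suc k) / (real n + 1)) * harm (Suc k) * cc (Suc k)"
        by simp
      also have "\<dots> = (-1)^k * (real (n choose k) / (real k + 1)) * harm (Suc k) * ((2 * real k + 1) * uu k * oharm (Suc k))"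
        unfolding e2 c ..
      finally have F: "- (1 / (real n + 1)) * ((-1)^(Suc k) * of_nat (Suc n choose Suc k) * harm (Suc k) * cc (Suc k))
          = (-1)^k * (real (n choose k) / (real k + 1)) * harm (Suc k) * ((2 * real k + 1) * uu k * oharm (Suc k))" .
      show ?thesis unfolding F uu_def by (simp add: divide_inverse mult_ac)
    qed
  qed
  also have "\<dots> = - (1 / (real n + 1)) * (\<Sum>j\<le>Suc n. (-1)^j * of_nat (Suc n choose j) * harm j * cc j)"
    by (subst sum.atMost_Suc_shift) (simp add: sum_distrib_left cc_def)
  also have "\<dots> = - (1 / (real n + 1)) * (harm (Suc n) * B (Suc n) - (\<Sum>j=1..Suc n. B (Suc n - j) / of_nat j))"
    unfolding L1 B_def ..
  also have "(\<Sum>j=1..Suc n. B (Suc n - j) / of_nat j) = (\<Sum>j=1..n. uu (n - j) * (oharm (n - j) - 1) / of_nat j)"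
  proof -
    have "(\<Sum>j=1..Suc n. B (Suc n - j) / of_nat j) = (\<Sum>j=1..n. B (Suc n - j) / of_nat j)"
      by (simp add: sum.cl_ivl_Suc B0)
    also have "\<dots> = (\<Sum>j=1..n. uu (n - j) * (oharm (n - j) - 1) / of_nat j)"
    proof (rule sum.cong[OF refl])
      fix j assume "j \<in> {1..n}"
      then have "Suc n - j = Suc (n - j)" by auto
      then show "B (Suc n - j) / of_nat j = uu (n - j) * (oharm (n - j) - 1) / of_nat j"
        by (simp add: BS)
    qed
    finally show ?thesis .
  qed
  also have "(\<Sum>j=1..n. uu (n - j) * (oharm (n - j) - 1) / of_nat j)
     = (\<Sum>k=1..n. real ((2*(n-k)) choose (n-k)) / (2^(2*(n-k)) * real k) * (oharm (n-k) - 1))"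
    by (rule sum.cong[OF refl]) (simp add: uu_def)
  finally have F: "(\<Sum>k=0..n. (-1)^k * (2 * real k + 1) / (2^(2*k) * (real k + 1))
         * real (n choose k) * real ((2*k) choose k) * harm (k+1) * oharm (k+1))
     = - (1 / (real n + 1)) * (harm (Suc n) * B (Suc n) - (\<Sum>k=1..n. real ((2*(n-k)) choose (n-k))
            / (2^(2*(n-k)) * real k) * (oharm (n-k) - 1)))" .
  show ?thesis unfolding F BS uu_def unfolding Suc_eq_plus1 by (rule aux3)
qed

theorem theorem11:
  shows "(\<forall>n::nat.
     (\<Sum>k=0..n. (-1)^k * (2 * real k + 1) / (2^(2*k) * (real k + 1))
         * real (n choose k) * real ((2*k) choose k) * harm (k+1) * oharm (k+1))
     = - real ((2*n) choose n) / (2^(2*n) * (real n + 1)) * harm (n+1) * (oharm n - 1)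
       + 1 / (real n + 1) * (\<Sum>k=1..n. real ((2*(n-k)) choose (n-k))
            / (2^(2*(n-k)) * real k) * (oharm (n-k) - 1)))
   \<and>
   (\<forall>(n::nat) (r::complex) (s::complex).
     r \<notin> negInts \<longrightarrow> s \<notin> negInts \<longrightarrow> s \<noteq> 0 \<longrightarrow> r - s \<notin> negInts \<longrightarrow>
     (\<Sum>k=1..n. (-1)^(k-1) * of_nat (n choose k) * harm k
         * (Hc (of_nat k + r - s) - Hc s) / cbinom (of_nat k + r) s)
     = - (r + 1) / (r - s + 1)^2
         * (\<Sum>k=1..n. 1 / (of_nat k * cbinom (of_nat (n-k) + r) (r - s + 1)))
       - s / (r - s + 1)
         * (\<Sum>k=1..n. (Hc (of_nat (n-k) + s - 1) - Hc (r - s + 1))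
              / (of_nat k * cbinom (of_nat (n-k) + r) (r - s + 1)))
       + (r + 1) * harm n / ((r - s + 1)^2 * cbinom (of_nat n + r) (r - s + 1))
       - s * harm n * (Hc (r - s + 1) - Hc (of_nat n + s - 1))
           / ((r - s + 1) * cbinom (of_nat n + r) (r - s + 1)))"
  using part1 part2 by blast

end
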